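(* Let $b\in(0,1]$ and let $f:[0,1]\to[0,1]$ be $$f(x)=\begin{cases} x, & 0\le x\le \tfrac12,\\ x(1-b+bx), & \tfrac12<x\le 1.\end{cases}$$ Then: (1) The set of fixed points of $f$ is $[0,\tfrac12]\cup\{1\}$. (2) For every $x\in(\tfrac12,1)$ there exists $n\in\mathbb N$ such that $f^n(x)=p$ and $f^{n+1}(x)=f(p)=p$ for some $p\in(\tfrac12-\tfrac b4,\tfrac12]$. (3) For every $x_0\in(\tfrac12-\tfrac b4,\tfrac12]$, the sequence defined recursively by $$x_{n+1}=\frac1b\left(\sqrt{bx_n+\left(\frac{1-b}{2}\right)^2}+\frac{b-1}{2}\right),\qquad n\ge 0,$$ consists of preimages of $x_0$: $f(x_{n+1})=x_n$ for all $n\ge 0$ (so $f^n(x_n)=x_0$), i.e. this recurrence gives the points whose orbits reach $x_0$.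
   Context: $f^n$ denotes the $n$-fold composition of $f$ with itself. This $f$ arises from a population of two species with state $(x,1-x)$, but the claim concerns only the map above. *)

theory Defs
  imports Complex_Main
begin

definition fmap :: "real \<Rightarrow> real \<Rightarrow> real" where
  "fmap b x = (if x \<le> 1/2 then x else x * (1 - b + b * x))"

end

theory Submission
  imports Defs
begin

lemma preimg:
  fixes b y :: real
  assumes b: "0 < b" "b \<le> 1" and y: "1/2 - b/4 < y" "y < 1"
  defines "z \<equiv> (1/b) * (sqrt (b * y + ((1 - b)/2)^2) + (b - 1)/2)"
  shows "1/2 < z \<and> z < 1 \<and> fmap b z = y"
proof -
  define c where "c = (1 - b)/2"
  define s where "s = sqrt (b * y + c^2)"
  have yp: "y > 0" using y b by linarith
  have rad: "b * y + c^2 \<ge> 0" by (intro add_nonneg_nonneg) (use yp b in auto)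
  have s0: "s \<ge> 0" unfolding s_def using rad by simp
  have ss: "s^2 = b*y + c^2" unfolding s_def using rad by simp
  have zd: "z = (s - c)/b" unfolding z_def s_def c_def by (simp add: field_simps)
  have "s^2 > (1/2)^2"
  proof -
    have "b*y > b*(1/2 - b/4)" using b y by simp
    moreover have "((1-b)/2)^2 = 1/4 - b/2 + b*b/4" by (simp add: power2_eq_square field_simps)
    ultimately have "b*y + ((1-b)/2)^2 > 1/4" by (simp add: algebra_simps)
    thus ?thesis using ss unfolding c_def by (simp add: power2_eq_square)
  qed
  hence s1: "s > 1/2" using s0 by (meson power_less_imp_less_base)
  have "s^2 < ((1+b)/2)^2"
  proof -
    have "b*y < b" using b y by simp
    moreover have "((1-b)/2)^2 = 1/4 - b/2 + b*b/4" by (simp add: power2_eq_square field_simps)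
    moreover have "((1+b)/2)^2 = 1/4 + b/2 + b*b/4" by (simp add: power2_eq_square field_simps)
    ultimately have "b*y + ((1-b)/2)^2 < ((1+b)/2)^2" by simp
    thus ?thesis using ss unfolding c_def by simp
  qed
  hence s2: "s < (1+b)/2" by (rule power_less_imp_less_base) (use b in auto)
  have z1: "1/2 < z" unfolding zd using s1 b unfolding c_def by (simp add: field_simps)
  have z2: "z < 1" unfolding zd using s2 b unfolding c_def by (simp add: field_simps)
  have "z * (1 - b + b*z) = y"
  proof -
    have "z * (1 - b + b*z) = (s - c) * (s + c) / b"
      unfolding zd c_def using b by (simp add: field_simps)
    also have "\<dots> = (s^2 - c^2)/b" by (simp add: power2_eq_square algebra_simps)
    also have "\<dots> = y" using ss b by simp
    finally show ?thesis .
  qed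
  thus ?thesis using z1 z2 unfolding fmap_def by simp
qed

lemma orbit:
  fixes b x0 :: real
  assumes b: "0 < b" "b \<le> 1" and x0: "x0 < 1"
  shows "\<forall>x. 1/2 < x \<and> x \<le> x0 \<and> x - 1/2 \<le> real k * (b * x0 * (1 - x0)) \<longrightarrow>
    (\<exists>n::nat. \<exists>p \<in> {1/2 - b/4<..1/2}. (fmap b ^^ n) x = p)"
proof (induction k)
  case 0
  then show ?case by auto
next
  case (Suc k)
  show ?case
  proof (intro allI impI)
    fix x assume h: "1/2 < x \<and> x \<le> x0 \<and> x - 1/2 \<le> real (Suc k) * (b * x0 * (1 - x0))"
    define d where "d = b * x0 * (1 - x0)"
    have fx: "fmap b x = x - b * x * (1 - x)" using h unfolding fmap_def by (simp add: algebra_simps)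
    have "x*(1-x) - x0*(1-x0) = (x0 - x)*(x0 + x - 1)" by (simp add: algebra_simps)
    also have "\<dots> \<ge> 0" using h by (intro mult_nonneg_nonneg) auto
    finally have "x*(1-x) \<ge> x0*(1-x0)" by simp
    hence "b*(x*(1-x)) \<ge> b*(x0*(1-x0))" using b by (simp add: mult_left_mono)
    hence fle: "fmap b x \<le> x - d" unfolding fx d_def by (simp add: algebra_simps)
    have flow: "fmap b x > 1/2 - b/4"
    proof -
      have "fmap b x - (1/2 - b/4) = (x - 1/2) + b*(x-1/2)^2"
        unfolding fx by (simp add: power2_eq_square algebra_simps)
      moreover have "b*(x-1/2)^2 \<ge> 0" using b by simp
      ultimately show ?thesis using h by linarith
    qed
    show "\<exists>n::nat. \<exists>p \<in> {1/2 - b/4<..1/2}. (fmap b ^^ n) x = p"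
    proof (cases "fmap b x \<le> 1/2")
      case True
      show ?thesis
        by (rule exI[of _ 1], rule bexI[of _ "fmap b x"]) (use True flow in auto)
    next
      case False
      have dpos: "d \<ge> 0" unfolding d_def using b h x0 by simp
      have "fmap b x - 1/2 \<le> real k * d"
        using h fle unfolding d_def by (simp add: algebra_simps)
      moreover have "fmap b x \<le> x0" using fle h dpos by linarith
      ultimately obtain n p where "p \<in> {1/2 - b/4<..1/2}" "(fmap b ^^ n) (fmap b x) = p"
        using Suc.IH False unfolding d_def by force
      moreover have "(fmap b ^^ Suc n) x = (fmap b ^^ n) (fmap b x)"
        by (simp only: funpow_Suc_right comp_def)
      ultimately show ?thesis by blast
    qed
  qed
qed

theorem proposition3p5:
  fixes b :: real
  assumes b: "0 < b" "b \<le> 1"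
  shows "({x \<in> {0..1}. fmap b x = x} = {0..1/2} \<union> {1}) \<and>
         (\<forall>x \<in> {1/2<..<1}. \<exists>n::nat. \<exists>p \<in> {1/2 - b/4<..1/2}.
           (fmap b ^^ n) x = p \<and> (fmap b ^^ (Suc n)) x = p \<and> fmap b p = p) \<and>
         (\<forall>xs :: nat \<Rightarrow> real. xs 0 \<in> {1/2 - b/4<..1/2} \<and>
           (\<forall>n. xs (Suc n) = (1/b) * (sqrt (b * xs n + ((1 - b)/2)^2) + (b - 1)/2))
           \<longrightarrow> (\<forall>n. xs n \<in> {0..1} \<and> fmap b (xs (Suc n)) = xs n \<and> (fmap b ^^ n) (xs n) = xs 0))"
proof (intro conjI allI ballI impI)
  show "{x \<in> {0..1}. fmap b x = x} = {0..1/2} \<union> {1}"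
  proof (intro set_eqI iffI)
    fix x :: real assume "x \<in> {x \<in> {0..1}. fmap b x = x}"
    hence x: "0 \<le> x" "x \<le> 1" "fmap b x = x" by auto
    show "x \<in> {0..1/2} \<union> {1}"
    proof (cases "x \<le> 1/2")
      case False
      hence "x * (1 - b + b*x) = x" using x unfolding fmap_def by simp
      hence "b * x * (x - 1) = 0" by (simp add: algebra_simps)
      hence "x = 1" using b False by simp
      thus ?thesis by simp
    qed (use x in auto)
  next
    fix x :: real assume "x \<in> {0..1/2} \<union> {1}"
    thus "x \<in> {x \<in> {0..1}. fmap b x = x}" unfolding fmap_def by auto
  qed
next
  fix x :: real assume x: "x \<in> {1/2<..<1}"
  have "b * x * (1 - x) > 0" using x b by simp
  then obtain k :: nat where "x - 1/2 < real k * (b * x * (1 - x))"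
    using ex_less_of_nat_mult by blast
  then obtain n p where p: "p \<in> {1/2 - b/4<..1/2}" "(fmap b ^^ n) x = p"
    using orbit[OF b, of x k] x by force
  have fp: "fmap b p = p" using p unfolding fmap_def by simp
  show "\<exists>n::nat. \<exists>p \<in> {1/2 - b/4<..1/2}.
           (fmap b ^^ n) x = p \<and> (fmap b ^^ (Suc n)) x = p \<and> fmap b p = p"
    using p fp by (intro exI[of _ n] bexI[of _ p]) auto
next
  fix xs :: "nat \<Rightarrow> real" and n
  assume h: "xs 0 \<in> {1/2 - b/4<..1/2} \<and>
           (\<forall>n. xs (Suc n) = (1/b) * (sqrt (b * xs n + ((1 - b)/2)^2) + (b - 1)/2))"
  have inv: "1/2 - b/4 < xs m \<and> xs m < 1 \<and> fmap b (xs (Suc m)) = xs m" for m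
  proof (induction m)
    case 0
    have "1/2 - b/4 < xs 0" "xs 0 < 1" using h by auto
    thus ?case using preimg[OF b, of "xs 0"] h by metis
  next
    case (Suc m)
    have a: "1/2 < xs (Suc m) \<and> xs (Suc m) < 1" using preimg[OF b, of "xs m"] Suc h by metis
    hence "1/2 - b/4 < xs (Suc m)" using b by linarith
    thus ?case using a preimg[OF b, of "xs (Suc m)"] h by metis
  qed
  have "1/2 - b/4 \<ge> 0" using b by simp
  thus "xs n \<in> {0..1}" using inv[of n] by auto
  show "fmap b (xs (Suc n)) = xs n" using inv by blast
  show "(fmap b ^^ n) (xs n) = xs 0"
  proof (induction n)
    case (Suc n)
    thus ?case using inv[of n] by (simp add: funpow_Suc_right del: funpow.simps)
  qed simp
qed

end
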